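(* Let $q\ge 2$ and let $f$ be a $q$-regular sequence with a zero-insensitive linear representation $(\mathbf{u},(M_i)_{0\le i<q},\mathbf{v})$, so that $f(n)=\mathbf{u}^t M_{n_0}M_{n_1}\cdots M_{n_L}\mathbf{v}$ where $n_L\cdots n_0$ is the $q$-ary expansion of $n$. Let $U$ be the smallest vector space such that every vector of the form $\mathbf{u}^t\prod_{i\in I}M_{n_i}$ (for a finite index set $I$ and digits $n_i\in\{0,\dots,q-1\}$) lies in the affine subspace $\mathbf{u}^t+U^t$, where $U^t=\{\mathbf{x}^t:\mathbf{x}\in U\}$; let $V$ be the smallest vector space such that every vector of the form $\prod_{j\in J}M_{n_j}\mathbf{v}$ lies in $\mathbf{v}+V$. Let $r$ be a nonnegative integer. Then $f$ is $q$-quasiadditive with parameter $r$ (i.e. $f(q^{k+r}a+b)=f(a)+f(b)$ for all nonnegative integers $a,b,k$ with $0\le b<q^k$) if and only if all of the following hold: (1) $\mathbf{u}^t\mathbf{v}=0$; (2) $\mathbf{x}^t(M_0^r-I)\mathbf{v}=0$ for all $\mathbf{x}\in U$; (3) $\mathbf{u}^t(M_0^r-I)\mathbf{y}=0$ for all $\mathbf{y}\in V$; (4) $\mathbf{x}^tM_0^r\mathbf{y}=0$ for all $\mathbf{x}\in U$ and $\mathbf{y}\in V$.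
   Context: A function $f$ on the nonnegative integers is $q$-regular if $f(n)=\mathbf{u}^t\mathbf{f}(n)$ for a vector $\mathbf{u}$ and a vector-valued function $\mathbf{f}$ for which there are square matrices $M_0,\dots,M_{q-1}$ with $\mathbf{f}(qn+i)=M_i\mathbf{f}(n)$ for all $0\le i<q$ and $qn+i>0$; set $\mathbf{v}=\mathbf{f}(0)$. Equivalently $f(n)=\mathbf{u}^t M_{n_0}M_{n_1}\cdots M_{n_L}\mathbf{v}$ for the $q$-ary expansion $n_L\cdots n_0$ of $n$. The triple $(\mathbf{u},(M_i)_{0\le i<q},\mathbf{v})$ is a linear representation of $f$; it is zero-insensitive if $M_0\mathbf{v}=\mathbf{v}$. $I$ denotes the identity matrix. *)

theory Defs
  imports "HOL-Analysis.Analysis"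
begin

definition dotp :: "'a::field ^ 'n \<Rightarrow> 'a ^ 'n \<Rightarrow> 'a" where
  "dotp x y = (\<Sum>i\<in>UNIV. x $ i * y $ i)"

definition matpow :: "'a::field ^ 'n ^ 'n \<Rightarrow> nat \<Rightarrow> 'a ^ 'n ^ 'n" where
  "matpow A r = (((**) A) ^^ r) (mat 1)"

definition word_prod :: "(nat \<Rightarrow> 'a::field ^ 'n ^ 'n) \<Rightarrow> nat list \<Rightarrow> 'a ^ 'n ^ 'n" where
  "word_prod M ws = foldr (\<lambda>i P. M i ** P) ws (mat 1)"

fun digits :: "nat \<Rightarrow> nat \<Rightarrow> nat list" where
  "digits q n = (if n = 0 \<or> q < 2 then [] else n mod q # digits q (n div q))"

definition digit_products :: "nat \<Rightarrow> (nat \<Rightarrow> 'a::field ^ 'n ^ 'n) \<Rightarrow> ('a ^ 'n ^ 'n) set" where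
  "digit_products q M = {word_prod M ws | ws. set ws \<subseteq> {..<q}}"

definition space_U :: "nat \<Rightarrow> 'a::field ^ 'n \<Rightarrow> (nat \<Rightarrow> 'a ^ 'n ^ 'n) \<Rightarrow> ('a ^ 'n) set" where
  "space_U q u M = \<Inter>{W. vec.subspace W \<and> (\<forall>P\<in>digit_products q M. u v* P \<in> (\<lambda>w. u + w) ` W)}"

definition space_V :: "nat \<Rightarrow> (nat \<Rightarrow> 'a::field ^ 'n ^ 'n) \<Rightarrow> 'a ^ 'n \<Rightarrow> ('a ^ 'n) set" where
  "space_V q M v = \<Inter>{W. vec.subspace W \<and> (\<forall>P\<in>digit_products q M. P *v v \<in> (\<lambda>w. v + w) ` W)}"

definition quasiadditive :: "nat \<Rightarrow> nat \<Rightarrow> (nat \<Rightarrow> 'a::field) \<Rightarrow> bool" where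
  "quasiadditive q r f \<longleftrightarrow> (\<forall>a b k. b < q ^ k \<longrightarrow> f (q ^ (k + r) * a + b) = f a + f b)"

end

theory Submission
  imports Defs
begin

declare digits.simps[simp del]

lemma digits0[simp]: "digits q 0 = []"
  by (subst digits.simps) simp

fun vl :: "nat \<Rightarrow> nat list \<Rightarrow> nat" where
  "vl q [] = 0" | "vl q (d # ws) = d + q * vl q ws"

lemma wp_Nil[simp]: "word_prod M [] = mat 1"
  by (simp add: word_prod_def)

lemma wp_Cons[simp]: "word_prod M (i # ws) = M i ** word_prod M ws"
  by (simp add: word_prod_def)

lemma wp_append: "word_prod M (xs @ ys) = word_prod M xs ** word_prod M ys"
  by (induction xs) (auto simp: matrix_mul_assoc)

lemma wp_replicate: "word_prod M (replicate r 0) = matpow (M 0) r"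
  by (induction r) (auto simp: matpow_def)

lemma vl_append: "vl q (xs @ ys) = vl q xs + q ^ length xs * vl q ys"
  by (induction xs) (auto simp: algebra_simps)

lemma vl_replicate: "vl q (replicate r 0) = 0"
  by (induction r) auto

lemma digits_step:
  assumes q: "q \<ge> 2" and d: "d < q" and z: "M 0 *v v = v"
  shows "word_prod M (digits q (d + q * m)) *v v = M d *v (word_prod M (digits q m) *v v)"
proof (cases "d + q * m = 0")
  case True
  then have "d = 0" "m = 0" using q by auto
  then show ?thesis using z by simp
next
  case False
  have "(d + q * m) mod q = d" "(d + q * m) div q = m" using d q by auto
  then have "digits q (d + q * m) = d # digits q m"
    using False q by (subst digits.simps) simp
  then show ?thesis by (simp add: matrix_vector_mul_assoc)
qed

lemma digits_main:
  assumes q: "q \<ge> 2" and z: "M 0 *v v = v" and ws: "set ws \<subseteq> {..<q}"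
  shows "word_prod M (digits q (vl q ws + q ^ length ws * a)) *v v
     = word_prod M ws *v (word_prod M (digits q a) *v v)"
  using ws
proof (induction ws)
  case Nil then show ?case by simp
next
  case (Cons d ws)
  have eq: "vl q (d # ws) + q ^ length (d # ws) * a = d + q * (vl q ws + q ^ length ws * a)"
    by (simp add: algebra_simps)
  have ds: "word_prod M (digits q (d + q * (vl q ws + q ^ length ws * a))) *v v
     = M d *v (word_prod M (digits q (vl q ws + q ^ length ws * a)) *v v)"
    using digits_step[of q d M v "vl q ws + q ^ length ws * a"] q z Cons.prems by simp
  have ih: "word_prod M (digits q (vl q ws + q ^ length ws * a)) *v v
     = word_prod M ws *v (word_prod M (digits q a) *v v)"
    using Cons by simp
  show ?case unfolding eq ds ih by (simp add: matrix_vector_mul_assoc matrix_mul_assoc)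
qed

lemma exists_word:
  assumes q: "q \<ge> 2"
  shows "b < q ^ k \<Longrightarrow> \<exists>ws. set ws \<subseteq> {..<q} \<and> length ws = k \<and> vl q ws = b"
proof (induction k arbitrary: b)
  case 0 then show ?case by auto
next
  case (Suc k)
  have "b div q < q ^ k" using Suc.prems q
    by (simp add: less_mult_imp_div_less mult.commute)
  then obtain ws where ws: "set ws \<subseteq> {..<q}" "length ws = k" "vl q ws = b div q"
    using Suc.IH by blast
  show ?case
    apply (rule exI[of _ "b mod q # ws"])
    using ws q by auto
qed

lemma dotp_mult: "dotp x (A *v y) = dotp (x v* A) y"
proof -
  have "dotp x (A *v y) = (\<Sum>i\<in>UNIV. \<Sum>j\<in>UNIV. x $ i * (A $ i $ j * y $ j))"
    unfolding dotp_def matrix_vector_mult_def by (simp add: sum_distrib_left)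
  also have "\<dots> = (\<Sum>j\<in>UNIV. \<Sum>i\<in>UNIV. x $ i * (A $ i $ j * y $ j))"
    by (rule sum.swap)
  also have "\<dots> = dotp (x v* A) y"
    unfolding dotp_def vector_matrix_mult_def by (simp add: sum_distrib_right mult.assoc)
  finally show ?thesis .
qed

lemma dotp_add_l: "dotp (x + y) z = dotp x z + dotp y z"
  unfolding dotp_def by (simp add: distrib_right sum.distrib)
lemma dotp_add_r: "dotp z (x + y) = dotp z x + dotp z y"
  unfolding dotp_def by (simp add: distrib_left sum.distrib)
lemma dotp_diff_l: "dotp (x - y) z = dotp x z - dotp y z"
  unfolding dotp_def by (simp add: left_diff_distrib sum_subtractf)
lemma dotp_diff_r: "dotp z (x - y) = dotp z x - dotp z y"
  unfolding dotp_def by (simp add: right_diff_distrib sum_subtractf)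
lemma dotp_smult_l: "dotp (c *s x) z = c * dotp x z"
  unfolding dotp_def by (simp add: sum_distrib_left mult.assoc)
lemma dotp_smult_r: "dotp z (c *s x) = c * dotp z x"
  unfolding dotp_def by (simp add: sum_distrib_left mult.left_commute)
lemma dotp_zero_l[simp]: "dotp 0 z = 0"
  unfolding dotp_def by simp
lemma dotp_zero_r[simp]: "dotp z 0 = 0"
  unfolding dotp_def by simp

lemma mv_smult: "(A::'a::field^'n^'m) *v (c *s x) = c *s (A *v x)"
  by (simp add: vec.scale)


lemma vl_less: "set ws \<subseteq> {..<q} \<Longrightarrow> vl q ws < q ^ length ws"
proof (induction ws)
  case Nil then show ?case by simp
next
  case (Cons d ws)
  then have a: "vl q ws + 1 \<le> q ^ length ws" and d: "d < q" by auto
  have "vl q (d # ws) = d + q * vl q ws" by simp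
  also have "\<dots> < q + q * vl q ws" using d by simp
  also have "\<dots> = q * (vl q ws + 1)" by simp
  also have "\<dots> \<le> q * q ^ length ws" using a by (rule mult_le_mono2)
  also have "\<dots> = q ^ length (d # ws)" by simp
  finally show ?case .
qed

lemma digits_set: "q \<ge> 2 \<Longrightarrow> set (digits q a) \<subseteq> {..<q}"
proof (induction q a rule: digits.induct)
  case (1 q n)
  show ?case
  proof (cases "n = 0")
    case True then show ?thesis by simp
  next
    case False
    then have "digits q n = n mod q # digits q (n div q)" using 1(2)
      by (subst digits.simps) simp
    have ih: "set (digits q (n div q)) \<subseteq> {..<q}" by (rule 1(1)) (use False 1(2) in auto)
    have "n mod q < q" using 1(2) by simp
    then show ?thesis unfolding \<open>digits q n = _\<close> using ih by simp
  qed
qed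

lemma matpow_v: "M0 *v v = v \<Longrightarrow> matpow M0 r *v v = v"
  by (induction r) (auto simp: matpow_def matrix_vector_mul_assoc[symmetric])

lemma ident:
  assumes "A *v v = v"
  shows "dotp p (A *v z) - dotp u z - dotp p v
    = dotp u (A *v (z - v)) - dotp u (z - v) + dotp (p - u) (A *v (z - v)) - dotp u v"
  unfolding dotp_diff_l dotp_diff_r matrix_vector_mult_diff_distrib assms
  by (simp add: diff_add_eq add_diff_eq diff_diff_eq2)

lemma aux_eq: "((a::'a::ab_group_add) = b + c) = (a - b - c = 0)"
  by (simp add: diff_diff_eq)

lemma dp_mem: "set ws \<subseteq> {..<q} \<Longrightarrow> word_prod M ws \<in> digit_products q M"
  unfolding digit_products_def by blast

theorem theorem9:
  fixes q r :: nat
    and f :: "nat \<Rightarrow> 'a::field"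
    and u v :: "'a ^ 'n"
    and M :: "nat \<Rightarrow> 'a ^ 'n ^ 'n"
  assumes q: "q \<ge> 2"
    and rep: "\<forall>n. f n = dotp u (word_prod M (digits q n) *v v)"
    and zero_ins: "M 0 *v v = v"
  shows "quasiadditive q r f \<longleftrightarrow>
    (dotp u v = 0
     \<and> (\<forall>x\<in>space_U q u M. dotp x ((matpow (M 0) r - mat 1) *v v) = 0)
     \<and> (\<forall>y\<in>space_V q M v. dotp u ((matpow (M 0) r - mat 1) *v y) = 0)
     \<and> (\<forall>x\<in>space_U q u M. \<forall>y\<in>space_V q M v. dotp x (matpow (M 0) r *v y) = 0))"
proof -
  define A where "A = matpow (M 0) r"
  define Wv where "Wv a = word_prod M (digits q a) *v v" for a
  have Av: "A *v v = v" unfolding A_def by (rule matpow_v[OF zero_ins])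
  have Wv0: "Wv 0 = v" unfolding Wv_def by simp
  have fa: "f a = dotp u (Wv a)" for a using rep Wv_def by simp
  have fb: "f (vl q ws) = dotp u (word_prod M ws *v v)" if "set ws \<subseteq> {..<q}" for ws
    using digits_main[where M=M and v=v and a=0, OF q zero_ins that] rep Wv0[unfolded Wv_def] by simp
  have Wvl: "Wv (vl q ws) = word_prod M ws *v v" if "set ws \<subseteq> {..<q}" for ws
    using digits_main[where M=M and v=v and a=0, OF q zero_ins that] Wv0[unfolded Wv_def] Wv_def by simp
  have fab: "f (q ^ (length ws + r) * a + vl q ws) = dotp u ((word_prod M ws ** A) *v Wv a)"
    if ws: "set ws \<subseteq> {..<q}" for ws a
  proof -
    have s: "set (ws @ replicate r 0) \<subseteq> {..<q}" using ws q by auto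
    have eq: "q ^ (length ws + r) * a + vl q ws
       = vl q (ws @ replicate r 0) + q ^ length (ws @ replicate r 0) * a"
      by (simp add: vl_append vl_replicate)
    show ?thesis
      unfolding eq rep[rule_format] digits_main[where M=M and v=v and a=a, OF q zero_ins s]
      by (simp add: Wv_def wp_append wp_replicate A_def matrix_vector_mul_assoc)
  qed
  define QQ where "QQ \<longleftrightarrow> (\<forall>ws a. set ws \<subseteq> {..<q} \<longrightarrow>
      dotp u ((word_prod M ws ** A) *v Wv a) = dotp u (Wv a) + dotp u (word_prod M ws *v v))"
  have 1: "quasiadditive q r f \<longleftrightarrow> QQ"
  proof
    assume qa: "quasiadditive q r f"
    show QQ unfolding QQ_def
    proof (intro allI impI)
      fix ws a assume ws: "set ws \<subseteq> {..<q}"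
      have "f (q ^ (length ws + r) * a + vl q ws) = f a + f (vl q ws)"
        using qa vl_less[OF ws] unfolding quasiadditive_def by blast
      then show "dotp u ((word_prod M ws ** A) *v Wv a) = dotp u (Wv a) + dotp u (word_prod M ws *v v)"
        using fab[OF ws] fa fb[OF ws] by simp
    qed
  next
    assume QQ
    show "quasiadditive q r f" unfolding quasiadditive_def
    proof (intro allI impI)
      fix a b k :: nat assume "b < q ^ k"
      then obtain ws where ws: "set ws \<subseteq> {..<q}" "length ws = k" "vl q ws = b"
        using exists_word[OF q] by blast
      show "f (q ^ (k + r) * a + b) = f a + f b"
        using fab[OF ws(1), of a] fa[of a] fb[OF ws(1)] ws \<open>QQ\<close> unfolding QQ_def by auto
    qed
  qed
  define G where "G x y = dotp u (A *v y) - dotp u y + dotp x (A *v y) - dotp u v" for x y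
  define X where "X = {u v* P - u | P. P \<in> digit_products q M}"
  define Y where "Y = {P *v v - v | P. P \<in> digit_products q M}"
  have 2: "QQ \<longleftrightarrow> (\<forall>x\<in>X. \<forall>y\<in>Y. G x y = 0)"
  proof -
    have e: "dotp u ((word_prod M ws ** A) *v z) - dotp u z - dotp u (word_prod M ws *v v)
        = G (u v* word_prod M ws - u) (z - v)" for ws z
      unfolding G_def using ident[OF Av, of "u v* word_prod M ws" z]
      by (simp add: dotp_mult matrix_vector_mul_assoc[symmetric])
    have QQ': "QQ \<longleftrightarrow> (\<forall>ws a. set ws \<subseteq> {..<q} \<longrightarrow> G (u v* word_prod M ws - u) (Wv a - v) = 0)"
      unfolding QQ_def e[symmetric] by (simp only: aux_eq)
    show ?thesis unfolding QQ'
    proof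
      assume h: "\<forall>ws a. set ws \<subseteq> {..<q} \<longrightarrow> G (u v* word_prod M ws - u) (Wv a - v) = 0"
      show "\<forall>x\<in>X. \<forall>y\<in>Y. G x y = 0"
      proof (intro ballI)
        fix x y assume "x \<in> X" "y \<in> Y"
        then obtain ws ws' where w: "set ws \<subseteq> {..<q}" "set ws' \<subseteq> {..<q}"
          "x = u v* word_prod M ws - u" "y = word_prod M ws' *v v - v"
          unfolding X_def Y_def digit_products_def by blast
        have "G (u v* word_prod M ws - u) (Wv (vl q ws') - v) = 0" using h w(1) by blast
        then show "G x y = 0" using w Wvl[OF w(2)] by simp
      qed
    next
      assume h: "\<forall>x\<in>X. \<forall>y\<in>Y. G x y = 0"
      show "\<forall>ws a. set ws \<subseteq> {..<q} \<longrightarrow> G (u v* word_prod M ws - u) (Wv a - v) = 0"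
      proof (intro allI impI)
        fix ws a assume ws: "set ws \<subseteq> {..<q}"
        have "u v* word_prod M ws - u \<in> X" unfolding X_def using dp_mem[OF ws] by blast
        moreover have "Wv a - v \<in> Y" unfolding Y_def Wv_def
          using dp_mem[OF digits_set[OF q]] by blast
        ultimately show "G (u v* word_prod M ws - u) (Wv a - v) = 0" using h by blast
      qed
    qed
  qed
  have dp0: "word_prod M [] \<in> digit_products q M" by (rule dp_mem) simp
  have "u v* word_prod M [] - u \<in> X" unfolding X_def using dp0 by blast
  then have X0: "0 \<in> X" by simp
  have "word_prod M [] *v v - v \<in> Y" unfolding Y_def using dp0 by blast
  then have Y0: "0 \<in> Y" by simp
  have XU: "X \<subseteq> space_U q u M"
  proof
    fix x assume "x \<in> X"
    then obtain P where P: "P \<in> digit_products q M" "x = u v* P - u" unfolding X_def by blast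
    show "x \<in> space_U q u M" unfolding space_U_def
    proof
      fix W assume "W \<in> {W. vec.subspace W \<and> (\<forall>P\<in>digit_products q M. u v* P \<in> (+) u ` W)}"
      then obtain w where "w \<in> W" "u v* P = u + w" using P by blast
      then show "x \<in> W" using P by simp
    qed
  qed
  have YV: "Y \<subseteq> space_V q M v"
  proof
    fix y assume "y \<in> Y"
    then obtain P where P: "P \<in> digit_products q M" "y = P *v v - v" unfolding Y_def by blast
    show "y \<in> space_V q M v" unfolding space_V_def
    proof
      fix W assume "W \<in> {W. vec.subspace W \<and> (\<forall>P\<in>digit_products q M. P *v v \<in> (+) v ` W)}"
      then obtain w where "w \<in> W" "P *v v = v + w" using P by blast
      then show "y \<in> W" using P by simp
    qed
  qed
  have c2: "(matpow (M 0) r - mat 1) *v v = 0"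
    using Av unfolding A_def by (simp add: matrix_vector_mult_diff_rdistrib)
  have c3: "dotp u ((matpow (M 0) r - mat 1) *v y) = dotp u (A *v y) - dotp u y" for y
    unfolding A_def by (simp add: matrix_vector_mult_diff_rdistrib dotp_diff_r)
  have 3: "(\<forall>x\<in>X. \<forall>y\<in>Y. G x y = 0) \<longleftrightarrow>
    (dotp u v = 0
     \<and> (\<forall>x\<in>space_U q u M. dotp x ((matpow (M 0) r - mat 1) *v v) = 0)
     \<and> (\<forall>y\<in>space_V q M v. dotp u ((matpow (M 0) r - mat 1) *v y) = 0)
     \<and> (\<forall>x\<in>space_U q u M. \<forall>y\<in>space_V q M v. dotp x (matpow (M 0) r *v y) = 0))"
  proof
    assume h: "\<forall>x\<in>X. \<forall>y\<in>Y. G x y = 0"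
    have "G 0 0 = 0" using h X0 Y0 by blast
    then have uv: "dotp u v = 0" unfolding G_def by simp
    have h3: "dotp u (A *v y) - dotp u y = 0" if "y \<in> Y" for y
    proof -
      have "G 0 y = 0" using h X0 that by blast
      then show ?thesis using uv unfolding G_def by simp
    qed
    have h4: "dotp x (A *v y) = 0" if "x \<in> X" "y \<in> Y" for x y
    proof -
      have "G x y = 0" using h that by blast
      then show ?thesis using uv h3[OF that(2)] unfolding G_def by simp
    qed
    define S3 where "S3 = {y. dotp u (A *v y) - dotp u y = 0 \<and> (\<forall>x\<in>X. dotp x (A *v y) = 0)}"
    have sub3: "vec.subspace S3" unfolding vec.subspace_def
    proof (intro conjI ballI allI)
      show "0 \<in> S3" unfolding S3_def by simp
    next
      fix y1 y2 assume "y1 \<in> S3" "y2 \<in> S3"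
      then show "y1 + y2 \<in> S3" unfolding S3_def
        by (simp add: matrix_vector_right_distrib dotp_add_r)
    next
      fix c y1 assume "y1 \<in> S3"
      then show "c *s y1 \<in> S3" unfolding S3_def
        by (simp add: mv_smult dotp_smult_r right_diff_distrib[symmetric])
    qed
    have VS3: "space_V q M v \<subseteq> S3" unfolding space_V_def
    proof (rule Inter_lower, safe intro!: sub3)
      fix P assume P: "P \<in> digit_products q M"
      have "P *v v - v \<in> Y" using P unfolding Y_def by blast
      then have "P *v v - v \<in> S3" using h3 h4 unfolding S3_def by blast
      then show "P *v v \<in> (+) v ` S3" by (rule image_eqI[rotated]) simp
    qed
    define S4 where "S4 = {x. \<forall>y\<in>space_V q M v. dotp x (A *v y) = 0}"
    have sub4: "vec.subspace S4" unfolding vec.subspace_def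
    proof (intro conjI ballI allI)
      show "0 \<in> S4" unfolding S4_def by simp
    next
      fix y1 y2 assume "y1 \<in> S4" "y2 \<in> S4"
      then show "y1 + y2 \<in> S4" unfolding S4_def by (simp add: dotp_add_l)
    next
      fix c y1 assume "y1 \<in> S4"
      then show "c *s y1 \<in> S4" unfolding S4_def by (simp add: dotp_smult_l)
    qed
    have US4: "space_U q u M \<subseteq> S4" unfolding space_U_def
    proof (rule Inter_lower, safe intro!: sub4)
      fix P assume P: "P \<in> digit_products q M"
      have "u v* P - u \<in> X" using P unfolding X_def by blast
      then have "u v* P - u \<in> S4" using VS3 unfolding S4_def S3_def by blast
      then show "u v* P \<in> (+) u ` S4" by (rule image_eqI[rotated]) simp
    qed
    show "dotp u v = 0
     \<and> (\<forall>x\<in>space_U q u M. dotp x ((matpow (M 0) r - mat 1) *v v) = 0)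
     \<and> (\<forall>y\<in>space_V q M v. dotp u ((matpow (M 0) r - mat 1) *v y) = 0)
     \<and> (\<forall>x\<in>space_U q u M. \<forall>y\<in>space_V q M v. dotp x (matpow (M 0) r *v y) = 0)"
    proof (intro conjI ballI)
      show "dotp u v = 0" by (rule uv)
    next
      fix x show "dotp x ((matpow (M 0) r - mat 1) *v v) = 0" using c2 by simp
    next
      fix y assume "y \<in> space_V q M v"
      then have "y \<in> S3" using VS3 by blast
      then show "dotp u ((matpow (M 0) r - mat 1) *v y) = 0" unfolding c3 S3_def by blast
    next
      fix x y assume "x \<in> space_U q u M" "y \<in> space_V q M v"
      then have "x \<in> S4" using US4 by blast
      then show "dotp x (matpow (M 0) r *v y) = 0"
        using \<open>y \<in> space_V q M v\<close> unfolding S4_def A_def by blast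
    qed
  next
    assume h: "dotp u v = 0
     \<and> (\<forall>x\<in>space_U q u M. dotp x ((matpow (M 0) r - mat 1) *v v) = 0)
     \<and> (\<forall>y\<in>space_V q M v. dotp u ((matpow (M 0) r - mat 1) *v y) = 0)
     \<and> (\<forall>x\<in>space_U q u M. \<forall>y\<in>space_V q M v. dotp x (matpow (M 0) r *v y) = 0)"
    show "\<forall>x\<in>X. \<forall>y\<in>Y. G x y = 0"
    proof (intro ballI)
      fix x y assume "x \<in> X" "y \<in> Y"
      then have "x \<in> space_U q u M" "y \<in> space_V q M v" using XU YV by auto
      then show "G x y = 0" using h c3[of y] unfolding G_def A_def by auto
    qed
  qed
  show ?thesis using 1 2 3 by simp
qed

end
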